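(* Let $n,m,T$ be positive integers, $\epsilon\ge 0$, and let $x(0),\dots,x(T)\in\mathbb{R}^n$ and $u(0),\dots,u(T-1)\in\mathbb{R}^m$ be given data, with $X_1:=[x(1)\ \cdots\ x(T)]$, $X_0:=[x(0)\ \cdots\ x(T-1)]$, $U_0:=[u(0)\ \cdots\ u(T-1)]$. Define $$\mathcal{C}:=\Big\{(A,B)\in\mathbb{R}^{n\times n}\times\mathbb{R}^{n\times m}:\ \begin{bmatrix} I & A & B\end{bmatrix}\begin{bmatrix} I & X_1\\ 0 & -X_0\\ 0 & -U_0\end{bmatrix}\begin{bmatrix} T\epsilon I & 0\\ 0 & -I\end{bmatrix}\begin{bmatrix} I & X_1\\ 0 & -X_0\\ 0 & -U_0\end{bmatrix}^\top\begin{bmatrix} I & A & B\end{bmatrix}^\top\succeq 0\Big\},$$ and, for $i\in\{0,\dots,T-1\}$, $$\mathcal{C}_i:=\{(A,B)\in\mathbb{R}^{n\times n}\times\mathbb{R}^{n\times m}:\ \epsilon I-(x(i+1)-Ax(i)-Bu(i))(x(i+1)-Ax(i)-Bu(i))^\top\succeq 0\},$$ and $\mathcal{I}:=\bigcap_{i=0}^{T-1}\mathcal{C}_i$. Then $\mathcal{I}\subseteq\mathcal{C}$.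
   Context: $\succeq 0$ denotes positive semidefiniteness. Equivalently, $\mathcal{C}$ is the set of $(A,B)$ for which there exists $D\in\mathbb{R}^{n\times T}$ with $X_1=AX_0+BU_0+D$ and $DD^\top\preceq T\epsilon I$, and $\mathcal{C}_i$ is the set of $(A,B)$ for which $d:=x(i+1)-Ax(i)-Bu(i)$ satisfies $|d|^2\le\epsilon$. *)

theory Defs
  imports "Jordan_Normal_Form.Matrix"
begin

definition psd :: "real mat \<Rightarrow> bool" where
  "psd M \<longleftrightarrow> M \<in> carrier_mat (dim_row M) (dim_row M) \<and> M = transpose_mat M \<and>
     (\<forall>v \<in> carrier_vec (dim_row M). v \<bullet> (M *\<^sub>v v) \<ge> 0)"

definition append_cols :: "real mat \<Rightarrow> real mat \<Rightarrow> real mat" (infixr \<open>@\<^sub>c\<close> 65) where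
  "A @\<^sub>c B = transpose_mat (transpose_mat A @\<^sub>r transpose_mat B)"

definition X1 :: "nat \<Rightarrow> nat \<Rightarrow> (nat \<Rightarrow> real vec) \<Rightarrow> real mat" where
  "X1 n T x = mat_of_cols n (map x [1..<T+1])"
definition X0 :: "nat \<Rightarrow> nat \<Rightarrow> (nat \<Rightarrow> real vec) \<Rightarrow> real mat" where
  "X0 n T x = mat_of_cols n (map x [0..<T])"
definition U0 :: "nat \<Rightarrow> nat \<Rightarrow> (nat \<Rightarrow> real vec) \<Rightarrow> real mat" where
  "U0 m T u = mat_of_cols m (map u [0..<T])"

definition setC :: "nat \<Rightarrow> nat \<Rightarrow> nat \<Rightarrow> real \<Rightarrow> (nat \<Rightarrow> real vec) \<Rightarrow> (nat \<Rightarrow> real vec)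
    \<Rightarrow> (real mat \<times> real mat) set" where
  "setC n m T \<epsilon> x u = {(A, B). A \<in> carrier_mat n n \<and> B \<in> carrier_mat n m \<and>
     (let IAB = (1\<^sub>m n @\<^sub>c A @\<^sub>c B);
          N = four_block_mat (1\<^sub>m n) (X1 n T x)
                (0\<^sub>m (n + m) n) (- (X0 n T x @\<^sub>r U0 m T u));
          Phi = four_block_mat ((real T * \<epsilon>) \<cdot>\<^sub>m 1\<^sub>m n) (0\<^sub>m n T) (0\<^sub>m T n) (- 1\<^sub>m T)
      in psd (IAB * N * Phi * transpose_mat N * transpose_mat IAB))}"

definition setCi :: "nat \<Rightarrow> nat \<Rightarrow> real \<Rightarrow> (nat \<Rightarrow> real vec) \<Rightarrow> (nat \<Rightarrow> real vec) \<Rightarrow> nat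
    \<Rightarrow> (real mat \<times> real mat) set" where
  "setCi n m \<epsilon> x u i = {(A, B). A \<in> carrier_mat n n \<and> B \<in> carrier_mat n m \<and>
     (let d = x (i + 1) - A *\<^sub>v x i - B *\<^sub>v u i
      in psd (\<epsilon> \<cdot>\<^sub>m 1\<^sub>m n - mat_of_cols n [d] * transpose_mat (mat_of_cols n [d])))}"

end

theory Submission
  imports Defs
begin

lemma append_cols_carrier:
  assumes "X \<in> carrier_mat r c1" "Y \<in> carrier_mat r c2"
  shows "X @\<^sub>c Y \<in> carrier_mat r (c1 + c2)"
  using assms unfolding append_cols_def by auto

lemma row_append_cols:
  assumes X: "X \<in> carrier_mat r c1" and Y: "Y \<in> carrier_mat r c2" and i: "i < r"
  shows "row (X @\<^sub>c Y) i = row X i @\<^sub>v row Y i"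
proof -
  have "row (X @\<^sub>c Y) i = col (transpose_mat X @\<^sub>r transpose_mat Y) i"
    unfolding append_cols_def using X Y i carrier_append_rows[of "transpose_mat X" c1 r "transpose_mat Y" c2]
    by (subst row_transpose) (auto simp: append_rows_def)
  also have "\<dots> = col (transpose_mat X) i @\<^sub>v col (transpose_mat Y) i"
    unfolding append_rows_def using X Y i
    by (subst col_four_block_mat(1)[of _ c1 r _ 0 _ c2]) auto
  finally show ?thesis using X Y i by simp
qed

lemma append_cols_mult_vec:
  assumes X: "X \<in> carrier_mat r c1" and Y: "Y \<in> carrier_mat r c2"
    and a: "a \<in> carrier_vec c1" and b: "b \<in> carrier_vec c2"
  shows "(X @\<^sub>c Y) *\<^sub>v (a @\<^sub>v b) = X *\<^sub>v a + Y *\<^sub>v b"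
proof (rule eq_vecI)
  have C: "X @\<^sub>c Y \<in> carrier_mat r (c1 + c2)" using append_cols_carrier[OF X Y] .
  show "dim_vec ((X @\<^sub>c Y) *\<^sub>v (a @\<^sub>v b)) = dim_vec (X *\<^sub>v a + Y *\<^sub>v b)"
    using C X Y by auto
  fix i assume "i < dim_vec (X *\<^sub>v a + Y *\<^sub>v b)"
  then have i: "i < r" using X Y by auto
  have "((X @\<^sub>c Y) *\<^sub>v (a @\<^sub>v b)) $ i = row (X @\<^sub>c Y) i \<bullet> (a @\<^sub>v b)"
    using C i by auto
  also have "\<dots> = row X i \<bullet> a + row Y i \<bullet> b"
    unfolding row_append_cols[OF X Y i] using X Y a b i
    by (intro scalar_prod_append) auto
  finally show "((X @\<^sub>c Y) *\<^sub>v (a @\<^sub>v b)) $ i = (X *\<^sub>v a + Y *\<^sub>v b) $ i"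
    using X Y a b i by auto
qed

lemma col_append_rows:
  assumes X: "X \<in> carrier_mat r1 c" and Y: "Y \<in> carrier_mat r2 c" and j: "j < c"
  shows "col (X @\<^sub>r Y) j = col X j @\<^sub>v col Y j"
  unfolding append_rows_def using X Y j
  by (subst col_four_block_mat(1)[of _ r1 c _ 0 _ r2]) auto

lemma uminus_append_vec:
  "- (a @\<^sub>v b) = (- a) @\<^sub>v (- (b :: real vec))"
  by (intro eq_vecI) auto

lemma smult_one_mult_vec:
  fixes v :: "real vec"
  assumes v: "v \<in> carrier_vec n"
  shows "(c \<cdot>\<^sub>m 1\<^sub>m n) *\<^sub>v v = c \<cdot>\<^sub>v v"
proof (rule eq_vecI)
  fix i assume "i < dim_vec (c \<cdot>\<^sub>v v)"
  then have i: "i < n" using v by auto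
  have "row (c \<cdot>\<^sub>m 1\<^sub>m n) i = c \<cdot>\<^sub>v unit_vec n i"
    using i by (intro eq_vecI) auto
  then show "((c \<cdot>\<^sub>m 1\<^sub>m n) *\<^sub>v v) $ i = (c \<cdot>\<^sub>v v) $ i"
    using i v by simp
qed (use v in auto)

lemma quad_rank1:
  fixes d v :: "real vec" and \<epsilon> :: real
  assumes d: "d \<in> carrier_vec n" and v: "v \<in> carrier_vec n"
  shows "v \<bullet> ((\<epsilon> \<cdot>\<^sub>m 1\<^sub>m n - mat_of_cols n [d] * transpose_mat (mat_of_cols n [d])) *\<^sub>v v)
     = \<epsilon> * (v \<bullet> v) - (d \<bullet> v)^2"
proof -
  let ?Q = "mat_of_cols n [d]"
  have Q: "?Q \<in> carrier_mat n 1" by auto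
  have QT: "transpose_mat ?Q \<in> carrier_mat 1 n" by auto
  have w: "transpose_mat ?Q *\<^sub>v v = vec 1 (\<lambda>_. d \<bullet> v)"
    using d v Q by (intro eq_vecI) auto
  have "(\<epsilon> \<cdot>\<^sub>m 1\<^sub>m n - ?Q * transpose_mat ?Q) *\<^sub>v v
     = (\<epsilon> \<cdot>\<^sub>m 1\<^sub>m n) *\<^sub>v v - ?Q *\<^sub>v (transpose_mat ?Q *\<^sub>v v)"
    using minus_mult_distrib_mat_vec[of "\<epsilon> \<cdot>\<^sub>m 1\<^sub>m n" n n "?Q * transpose_mat ?Q" v]
      assoc_mult_mat_vec[OF Q QT v] Q QT v by simp
  then have "v \<bullet> ((\<epsilon> \<cdot>\<^sub>m 1\<^sub>m n - ?Q * transpose_mat ?Q) *\<^sub>v v)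
     = v \<bullet> ((\<epsilon> \<cdot>\<^sub>m 1\<^sub>m n) *\<^sub>v v) - v \<bullet> (?Q *\<^sub>v (transpose_mat ?Q *\<^sub>v v))"
    using Q QT v scalar_prod_minus_distrib[OF v, of "(\<epsilon> \<cdot>\<^sub>m 1\<^sub>m n) *\<^sub>v v" "?Q *\<^sub>v (transpose_mat ?Q *\<^sub>v v)"]
    by (metis mult_mat_vec_carrier one_carrier_mat smult_carrier_mat)
  also have "v \<bullet> ((\<epsilon> \<cdot>\<^sub>m 1\<^sub>m n) *\<^sub>v v) = \<epsilon> * (v \<bullet> v)"
  proof -
    have "(\<epsilon> \<cdot>\<^sub>m 1\<^sub>m n) *\<^sub>v v = \<epsilon> \<cdot>\<^sub>v v"
    proof (rule eq_vecI)
      fix i assume "i < dim_vec (\<epsilon> \<cdot>\<^sub>v v)"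
      then have i: "i < n" using v by auto
      have "row (\<epsilon> \<cdot>\<^sub>m 1\<^sub>m n) i = \<epsilon> \<cdot>\<^sub>v unit_vec n i"
        using i by (intro eq_vecI) auto
      then show "((\<epsilon> \<cdot>\<^sub>m 1\<^sub>m n) *\<^sub>v v) $ i = (\<epsilon> \<cdot>\<^sub>v v) $ i"
        using i v by simp
    qed (use v in auto)
    then show ?thesis using v by simp
  qed
  also have "v \<bullet> (?Q *\<^sub>v (transpose_mat ?Q *\<^sub>v v)) = (transpose_mat ?Q *\<^sub>v v) \<bullet> (transpose_mat ?Q *\<^sub>v v)"
    using Q v by (subst transpose_vec_mult_scalar[symmetric, of _ n 1]) auto
  also have "\<dots> = (d \<bullet> v)^2" unfolding w by (simp add: scalar_prod_def power2_eq_square)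
  finally show ?thesis .
qed


theorem proposition3:
  fixes n m T :: nat and \<epsilon> :: real and x u :: "nat \<Rightarrow> real vec"
  assumes "n > 0" and "m > 0" and "T > 0" and "\<epsilon> \<ge> 0"
    and "\<And>i. i \<le> T \<Longrightarrow> x i \<in> carrier_vec n"
    and "\<And>i. i < T \<Longrightarrow> u i \<in> carrier_vec m"
  shows "(\<Inter>i \<in> {0..<T}. setCi n m \<epsilon> x u i) \<subseteq> setC n m T \<epsilon> x u"
proof
  fix p assume p: "p \<in> (\<Inter>i \<in> {0..<T}. setCi n m \<epsilon> x u i)"
  obtain A B where pAB: "p = (A, B)" by (cases p)
  have xc: "\<And>i. i \<le> T \<Longrightarrow> x i \<in> carrier_vec n" and uc: "\<And>i. i < T \<Longrightarrow> u i \<in> carrier_vec m"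
    using assms by auto
  have "(A, B) \<in> setCi n m \<epsilon> x u 0" using p pAB assms(3) by auto
  then have A: "A \<in> carrier_mat n n" and B: "B \<in> carrier_mat n m"
    unfolding setCi_def by auto
  define d where "d t = x (t + 1) - A *\<^sub>v x t - B *\<^sub>v u t" for t
  have dc: "d t \<in> carrier_vec n" if "t < T" for t
    unfolding d_def using that A B xc uc by auto
  have dq: "(d t \<bullet> v)^2 \<le> \<epsilon> * (v \<bullet> v)" if t: "t < T" and v: "v \<in> carrier_vec n" for t v
  proof -
    let ?M = "\<epsilon> \<cdot>\<^sub>m 1\<^sub>m n - mat_of_cols n [d t] * transpose_mat (mat_of_cols n [d t])"
    have "(A, B) \<in> setCi n m \<epsilon> x u t" using p pAB t by auto
    then have "psd ?M" unfolding setCi_def d_def Let_def by auto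
    moreover have "dim_row ?M = n" by simp
    ultimately have "v \<bullet> (?M *\<^sub>v v) \<ge> 0" using v unfolding psd_def by auto
    then show ?thesis using quad_rank1[OF dc[OF t] v, of \<epsilon>] by simp
  qed
  define IAB where "IAB = 1\<^sub>m n @\<^sub>c A @\<^sub>c B"
  define N where "N = four_block_mat (1\<^sub>m n) (X1 n T x) (0\<^sub>m (n + m) n) (- (X0 n T x @\<^sub>r U0 m T u))"
  define Phi where "Phi = four_block_mat ((real T * \<epsilon>) \<cdot>\<^sub>m 1\<^sub>m n) (0\<^sub>m n T) (0\<^sub>m T n) (- 1\<^sub>m T)"
  define P where "P = IAB * N"
  have AB: "A @\<^sub>c B \<in> carrier_mat n (n + m)" using append_cols_carrier[OF A B] .
  have IABc: "IAB \<in> carrier_mat n (n + (n + m))"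
    unfolding IAB_def using append_cols_carrier[OF _ AB] by auto
  have X1c: "X1 n T x \<in> carrier_mat n T" unfolding X1_def
    using mat_of_cols_carrier(1)[of n "map x [1..<T+1]"] by (simp del: upt_Suc)
  have X0c: "X0 n T x \<in> carrier_mat n T" unfolding X0_def
    using mat_of_cols_carrier(1)[of n "map x [0..<T]"] by simp
  have U0c: "U0 m T u \<in> carrier_mat m T" unfolding U0_def
    using mat_of_cols_carrier(1)[of m "map u [0..<T]"] by simp
  have XUc: "X0 n T x @\<^sub>r U0 m T u \<in> carrier_mat (n + m) T" using X0c U0c by auto
  have mXUc: "- (X0 n T x @\<^sub>r U0 m T u) \<in> carrier_mat (n + m) T" using XUc by auto
  have Nc: "N \<in> carrier_mat (n + (n + m)) (n + T)" unfolding N_def using mXUc by auto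
  have Phic: "Phi \<in> carrier_mat (n + T) (n + T)" unfolding Phi_def by auto
  have Pc: "P \<in> carrier_mat n (n + T)" unfolding P_def using IABc Nc by auto
  have colP: "col P k = (if k < n then unit_vec n k else d (k - n))" if k: "k < n + T" for k
  proof -
    have "col P k = IAB *\<^sub>v col N k" unfolding P_def using col_mult2[OF IABc Nc k] .
    also have "\<dots> = (if k < n then unit_vec n k else d (k - n))"
    proof (cases "k < n")
      case True
      have "col N k = unit_vec n k @\<^sub>v (0\<^sub>v n @\<^sub>v 0\<^sub>v m)"
        unfolding N_def
        apply (subst col_four_block_mat(1)[of _ n n _ T _ "n + m" _ ])
        using True X1c mXUc by (auto intro!: eq_vecI)
      then have "IAB *\<^sub>v col N k = unit_vec n k"
        unfolding IAB_def using True A B AB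
        by (simp add: append_cols_mult_vec[of _ n n _ "n + m"] append_cols_mult_vec[OF A B])
          (intro eq_vecI, auto)
      then show ?thesis using True by simp
    next
      case False
      define j where "j = k - n"
      have j: "j < T" using k False unfolding j_def by auto
      have c1: "col (X1 n T x) j = x (j + 1)" unfolding X1_def
        using j xc[of "j+1"] by (simp del: upt_Suc add: nth_append)
      have c0: "col (X0 n T x) j = x j" unfolding X0_def
        using j xc[of j] by simp
      have c3: "col (U0 m T u) j = u j" unfolding U0_def
        using j uc[of j] by simp
      have c2: "col (- (X0 n T x @\<^sub>r U0 m T u)) j = - x j @\<^sub>v - u j"
        using XUc j by (simp add: col_append_rows[OF X0c U0c j] c0 c3 uminus_append_vec)
      have "col N k = x (j + 1) @\<^sub>v (- x j @\<^sub>v - u j)"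
        unfolding N_def
        apply (subst col_four_block_mat(2)[of _ n n _ T _ "n + m" _ ])
        using False k X1c mXUc j c1 c2 by (auto simp: j_def[symmetric])
      then have "IAB *\<^sub>v col N k = x (j + 1) + (A *\<^sub>v (- x j) + B *\<^sub>v (- u j))"
        unfolding IAB_def using A B AB j xc uc
        by (simp add: append_cols_mult_vec[of _ n n _ "n + m"] append_cols_mult_vec[OF A B])
      also have "\<dots> = d j" unfolding d_def
        using A B j xc[of j] xc[of "j+1"] uc[of j] by (intro eq_vecI) auto
      finally show ?thesis using False j_def by simp
    qed
    finally show ?thesis .
  qed
  let ?M = "IAB * N * Phi * transpose_mat N * transpose_mat IAB"
  have Meq: "?M = (P * Phi) * transpose_mat P"
  proof -
    have "?M = (P * Phi) * (transpose_mat N * transpose_mat IAB)"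
      unfolding P_def using IABc Nc Phic
      by (subst assoc_mult_mat[of _ n "n + T" _ "n + (n + m)"]) auto
    also have "transpose_mat N * transpose_mat IAB = transpose_mat P"
      unfolding P_def using transpose_mult[OF IABc Nc] by simp
    finally show ?thesis .
  qed
  have Mc: "?M \<in> carrier_mat n n" unfolding Meq using Pc Phic by auto
  have PhiT: "transpose_mat Phi = Phi"
    unfolding Phi_def by (intro eq_matI) auto
  have sym: "?M = transpose_mat ?M"
  proof -
    have "transpose_mat ((P * Phi) * transpose_mat P) = P * (transpose_mat Phi * transpose_mat P)"
      using Pc Phic by (subst transpose_mult[of _ n "n + T"]) (auto simp: transpose_mult[OF Pc Phic])
    also have "\<dots> = (P * Phi) * transpose_mat P"
      unfolding PhiT using Pc Phic by (subst assoc_mult_mat[of _ n "n + T" _ "n + T"]) auto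
    finally show ?thesis unfolding Meq by simp
  qed
  have quad: "v \<bullet> (?M *\<^sub>v v) \<ge> 0" if v: "v \<in> carrier_vec n" for v
  proof -
    define z where "z = vec T (\<lambda>t. d t \<bullet> v)"
    have zc: "z \<in> carrier_vec T" unfolding z_def by simp
    have w: "transpose_mat P *\<^sub>v v = v @\<^sub>v z"
    proof (rule eq_vecI)
      fix k assume "k < dim_vec (v @\<^sub>v z)"
      then have k: "k < n + T" using v zc by auto
      have "(transpose_mat P *\<^sub>v v) $ k = col P k \<bullet> v" using Pc k by simp
      then show "(transpose_mat P *\<^sub>v v) $ k = (v @\<^sub>v z) $ k"
        using colP[OF k] v k unfolding z_def by (cases "k < n") auto
    qed (use Pc v zc in auto)
    have z1: "0\<^sub>m n T *\<^sub>v z = 0\<^sub>v n" using zc by (intro eq_vecI) auto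
    have z2: "0\<^sub>m T n *\<^sub>v v = 0\<^sub>v T" using v by (intro eq_vecI) auto
    have Phiw: "Phi *\<^sub>v (v @\<^sub>v z) = ((real T * \<epsilon>) \<cdot>\<^sub>v v) @\<^sub>v (- z)"
      unfolding Phi_def
      using four_block_mat_mult_vec[of "(real T * \<epsilon>) \<cdot>\<^sub>m 1\<^sub>m n" n n "0\<^sub>m n T" T "0\<^sub>m T n" T "- 1\<^sub>m T" v z]
        v zc smult_one_mult_vec[OF v] z1 z2 by simp
    have "?M *\<^sub>v v = P *\<^sub>v (Phi *\<^sub>v (transpose_mat P *\<^sub>v v))"
    proof -
      have PT: "transpose_mat P \<in> carrier_mat (n + T) n" using Pc by simp
      have PP: "P * Phi \<in> carrier_mat n (n + T)" using Pc Phic by simp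
      show ?thesis unfolding Meq
        using assoc_mult_mat_vec[OF PP PT v] assoc_mult_mat_vec[OF Pc Phic, of "transpose_mat P *\<^sub>v v"] PT v
        by simp
    qed
    then have "v \<bullet> (?M *\<^sub>v v) = (transpose_mat P *\<^sub>v v) \<bullet> (Phi *\<^sub>v (transpose_mat P *\<^sub>v v))"
      using transpose_vec_mult_scalar[OF Pc _ v, of "Phi *\<^sub>v (transpose_mat P *\<^sub>v v)"] Pc Phic v by simp
    also have "\<dots> = v \<bullet> ((real T * \<epsilon>) \<cdot>\<^sub>v v) + z \<bullet> (- z)"
      unfolding w Phiw using v zc by (intro scalar_prod_append) auto
    also have "\<dots> = real T * \<epsilon> * (v \<bullet> v) - (\<Sum>t<T. (d t \<bullet> v)^2)"
      using v zc by (simp add: z_def scalar_prod_def power2_eq_square lessThan_atLeast0 sum_negf sum_distrib_left mult_ac)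
    finally have eq: "v \<bullet> (?M *\<^sub>v v) = real T * \<epsilon> * (v \<bullet> v) - (\<Sum>t<T. (d t \<bullet> v)^2)" .
    have "(\<Sum>t<T. (d t \<bullet> v)^2) \<le> (\<Sum>t<T. \<epsilon> * (v \<bullet> v))"
      by (rule sum_mono) (use dq v in auto)
    then show ?thesis unfolding eq by simp
  qed
  have "psd ?M"
    unfolding psd_def using Mc sym quad by auto
  then show "p \<in> setC n m T \<epsilon> x u"
    unfolding pAB setC_def Let_def IAB_def[symmetric] N_def[symmetric] Phi_def[symmetric]
    using A B by (simp add: IAB_def)
qed

end
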